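(* Let $f:\mathbb{F}_q^k\to\mathrm{Im}(f)$ and integers $0\le t_d\le t_f$. Then: (i) for any $\{u_1,\dots,u_m\}\subseteq\mathbb{F}_q^k$, $r_f(k,t_d,t_f)\ge N(\mathcal{D}_f(t_d,t_f:u_1,\dots,u_m))$; (ii) if $|\mathrm{Im}(f)|\ge 2$, then $r_f(k,t_d,t_f)\ge 2t_f$; (iii) $r_f(k,t_d,t_f)\ge N(q^k,2t_d+1)-k$, where $N(M,d)$ denotes the minimum length of a $q$-ary code with $M$ codewords and minimum distance at least $d$.
   Context: $d(\cdot,\cdot)$ is Hamming distance. For $f:\mathbb{F}_q^k\to\mathrm{Im}(f)$ and integers $0\le d_d\le d_f$, an $(f\!:d_d,d_f)$-FCC with redundancy $r$ is a systematic encoding $\mathfrak{C}_f(u)=(u,p_u)\in\mathbb{F}_q^{k+r}$ with $d(\mathfrak{C}_f(u_1),\mathfrak{C}_f(u_2))\ge d_d$ whenever $u_1\ne u_2$ and $\ge d_f$ whenever $f(u_1)\ne f(u_2)$. $r_f(k,t_d,t_f)$ is the minimum $r$ for which an $(f\!:2t_d+1,2t_f+1)$-FCC with redundancy $r$ exists. $\mathcal{D}_f(t_d,t_f:u_1,\dots,u_M)$ is the $M\times M$ matrix with $(i,j)$ entry $\max(2t_d+1-d(u_i,u_j),0)$ if $u_i\ne u_j$ and $f(u_i)=f(u_j)$; $\max(2t_f+1-d(u_i,u_j),0)$ if $f(u_i)\ne f(u_j)$; $0$ otherwise. For a nonnegative integer matrix $\mathcal{D}$, $N(\mathcal{D})$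 is the least $r$ such that there are $p_1,\dots,p_M\in\mathbb{F}_q^r$ with $d(p_i,p_j)\ge[\mathcal{D}]_{i,j}$ for all $i,j$. *)

theory Defs
  imports Main
begin

definition words :: "nat \<Rightarrow> 'a list set" where
  "words n = {xs. length xs = n}"

definition hamming :: "'a list \<Rightarrow> 'a list \<Rightarrow> nat" where
  "hamming xs ys = card {i. i < length xs \<and> xs ! i \<noteq> ys ! i}"

text \<open>p is the redundancy map of an (f : dd, df)-FCC with redundancy r for
  messages of length k; the codeword of u is u @ p u.\<close>
definition is_FCC :: "('a list \<Rightarrow> 'b) \<Rightarrow> nat \<Rightarrow> nat \<Rightarrow> nat \<Rightarrow> nat \<Rightarrow> ('a list \<Rightarrow> 'a list) \<Rightarrow> bool" where
  "is_FCC f k dd df r p \<longleftrightarrow>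
     (\<forall>u\<in>words k. length (p u) = r) \<and>
     (\<forall>u1\<in>words k. \<forall>u2\<in>words k.
        (u1 \<noteq> u2 \<longrightarrow> hamming (u1 @ p u1) (u2 @ p u2) \<ge> dd) \<and>
        (f u1 \<noteq> f u2 \<longrightarrow> hamming (u1 @ p u1) (u2 @ p u2) \<ge> df))"

definition r_f :: "('a list \<Rightarrow> 'b) \<Rightarrow> nat \<Rightarrow> nat \<Rightarrow> nat \<Rightarrow> nat" where
  "r_f f k td tf = (LEAST r. \<exists>p :: 'a list \<Rightarrow> 'a list. is_FCC f k (2*td+1) (2*tf+1) r p)"

text \<open>The distance requirement matrix D_f(t_d,t_f : u_1,...,u_M), indexed from 0.\<close>
definition Dmat :: "('a list \<Rightarrow> 'b) \<Rightarrow> nat \<Rightarrow> nat \<Rightarrow> 'a list list \<Rightarrow> nat \<Rightarrow> nat \<Rightarrow> nat" where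
  "Dmat f td tf us i j =
     (if us ! i \<noteq> us ! j \<and> f (us ! i) = f (us ! j) then (2*td+1) - hamming (us ! i) (us ! j)
      else if f (us ! i) \<noteq> f (us ! j) then (2*tf+1) - hamming (us ! i) (us ! j)
      else 0)"

definition N_mat :: "'a itself \<Rightarrow> nat \<Rightarrow> (nat \<Rightarrow> nat \<Rightarrow> nat) \<Rightarrow> nat" where
  "N_mat _ M D = (LEAST r. \<exists>ps :: nat \<Rightarrow> 'a list.
      (\<forall>i<M. length (ps i) = r) \<and> (\<forall>i<M. \<forall>j<M. hamming (ps i) (ps j) \<ge> D i j))"

definition N_code :: "'a itself \<Rightarrow> nat \<Rightarrow> nat \<Rightarrow> nat" where
  "N_code _ M d = (LEAST n. \<exists>C :: 'a list set. C \<subseteq> words n \<and> card C = M \<and>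
      (\<forall>c1\<in>C. \<forall>c2\<in>C. c1 \<noteq> c2 \<longrightarrow> hamming c1 c2 \<ge> d))"

end

theory Submission
  imports Defs
begin

lemma hamming_Nil[simp]: "hamming [] ys = 0"
  by (simp add: hamming_def)

lemma hamming_Cons:
  "hamming (x#xs) (y#ys) = (if x \<noteq> y then 1 else 0) + hamming xs ys"
proof -
  have eq: "{i. i < length (x#xs) \<and> (x#xs) ! i \<noteq> (y#ys) ! i}
     = {i. i = 0 \<and> x \<noteq> y} \<union> Suc ` {i. i < length xs \<and> xs ! i \<noteq> ys ! i}"
  proof (rule set_eqI)
    fix i show "i \<in> {i. i < length (x#xs) \<and> (x#xs) ! i \<noteq> (y#ys) ! i} \<longleftrightarrow>
      i \<in> {i. i = 0 \<and> x \<noteq> y} \<union> Suc ` {i. i < length xs \<and> xs ! i \<noteq> ys ! i}"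
      by (cases i) auto
  qed
  have "card ({i. i = 0 \<and> x \<noteq> y} \<union> Suc ` {i. i < length xs \<and> xs ! i \<noteq> ys ! i})
      = card {i::nat. i = 0 \<and> x \<noteq> y} + card (Suc ` {i. i < length xs \<and> xs ! i \<noteq> ys ! i})"
    by (intro card_Un_disjoint) (auto intro: finite_subset[of _ "{0}"])
  also have "card (Suc ` {i. i < length xs \<and> xs ! i \<noteq> ys ! i}) = hamming xs ys"
    unfolding hamming_def by (simp add: card_image)
  also have "card {i::nat. i = 0 \<and> x \<noteq> y} = (if x \<noteq> y then 1 else 0)" by auto
  finally show ?thesis unfolding hamming_def[of "x#xs"] eq .
qed

lemma hamming_self[simp]: "hamming xs xs = 0"
  by (simp add: hamming_def)

lemma hamming_append:
  "length a = length b \<Longrightarrow> hamming (a@c) (b@d) = hamming a b + hamming c d"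
proof (induction a arbitrary: b)
  case Nil then show ?case by simp
next
  case (Cons x a) then obtain y b' where "b = y#b'" by (cases b) auto
  with Cons show ?case by (simp add: hamming_Cons)
qed

lemma hamming_le: "hamming xs ys \<le> length xs"
proof -
  have "{i. i < length xs \<and> xs ! i \<noteq> ys ! i} \<subseteq> {..<length xs}" by auto
  then show ?thesis unfolding hamming_def by (metis card_lessThan card_mono finite_lessThan)
qed

lemma hamming_zero: "length xs = length ys \<Longrightarrow> hamming xs ys = 0 \<Longrightarrow> xs = ys"
proof -
  assume l: "length xs = length ys" and h: "hamming xs ys = 0"
  have "finite {i. i < length xs \<and> xs ! i \<noteq> ys ! i}" by simp
  with h have "{i. i < length xs \<and> xs ! i \<noteq> ys ! i} = {}" unfolding hamming_def by simp
  then show ?thesis using l by (auto intro: nth_equalityI)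
qed

lemma hamming_rep:
  "length a = length b \<Longrightarrow> hamming (concat (replicate m a)) (concat (replicate m b)) = m * hamming a b"
  by (induction m) (simp_all add: hamming_append)

lemma path_lemma:
  "length xs = length ys \<Longrightarrow> g xs \<noteq> g ys \<Longrightarrow>
     \<exists>v w. length v = length xs \<and> length w = length xs \<and> hamming v w \<le> 1 \<and> g v \<noteq> g w"
proof (induction xs arbitrary: ys g)
  case Nil then show ?case by simp
next
  case (Cons x xs)
  then obtain y ys' where ys: "ys = y#ys'" by (cases ys) auto
  show ?case
  proof (cases "g (x#xs) = g (x#ys')")
    case True
    then have "g (x#ys') \<noteq> g (y#ys')" using Cons ys by simp
    moreover have "hamming (x#ys') (y#ys') \<le> 1"
      by (simp add: hamming_Cons)
    ultimately show ?thesis using Cons ys by (metis length_Cons)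
  next
    case False
    then obtain v w where "length v = length xs" "length w = length xs" "hamming v w \<le> 1"
        "(\<lambda>l. g (x#l)) v \<noteq> (\<lambda>l. g (x#l)) w"
      using Cons.IH[of ys' "\<lambda>l. g (x#l)"] Cons.prems ys by auto
    then show ?thesis
      by (intro exI[of _ "x#v"] exI[of _ "x#w"]) (simp add: hamming_Cons)
  qed
qed

lemma FCC_exists:
  assumes "td \<le> tf"
  shows "\<exists>r p. is_FCC f k (2*td+1) (2*tf+1) r p"
proof -
  define m where "m = 2*tf+1"
  define p where "p = (\<lambda>u::'a list. concat (replicate m u))"
  have "is_FCC f k (2*td+1) (2*tf+1) (m*k) p"
    unfolding is_FCC_def
  proof (intro conjI ballI impI)
    fix u :: "'a list" assume "u \<in> words k"
    then show "length (p u) = m*k" by (simp add: p_def words_def length_concat sum_list_replicate)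
  next
    fix u1 u2 :: "'a list" assume u: "u1 \<in> words k" "u2 \<in> words k"
    have l: "length u1 = length u2" using u by (simp add: words_def)
    have H: "hamming (u1 @ p u1) (u2 @ p u2) = (m+1) * hamming u1 u2"
      using l by (simp add: p_def hamming_append hamming_rep)
    {
      assume "u1 \<noteq> u2"
      then have "hamming u1 u2 \<ge> 1" using hamming_zero[OF l] by fastforce
      then have "(m+1)*1 \<le> (m+1) * hamming u1 u2" by (rule mult_le_mono2)
      then have "hamming (u1 @ p u1) (u2 @ p u2) \<ge> m+1" unfolding H by simp
    } note * = this
    show "2*td+1 \<le> hamming (u1 @ p u1) (u2 @ p u2)" if "u1 \<noteq> u2"
      using *[OF that] assms m_def by linarith
    show "2*tf+1 \<le> hamming (u1 @ p u1) (u2 @ p u2)" if "f u1 \<noteq> f u2"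
      using that *[of] m_def by fastforce
  qed
  then show ?thesis by blast
qed

theorem theorem4:
  fixes f :: "'a::{finite,field} list \<Rightarrow> 'b" and k td tf :: nat
  assumes "td \<le> tf"
  shows "(\<forall>us :: 'a list list. distinct us \<and> set us \<subseteq> words k \<longrightarrow>
            r_f f k td tf \<ge> N_mat TYPE('a) (length us) (Dmat f td tf us))
       \<and> (card (f ` words k) \<ge> 2 \<longrightarrow> r_f f k td tf \<ge> 2 * tf)
       \<and> int (r_f f k td tf) \<ge> int (N_code TYPE('a) (card (UNIV :: 'a set) ^ k) (2*td+1)) - int k"
proof -
  define r where "r = r_f f k td tf"
  obtain r0 p0 where "is_FCC f k (2*td+1) (2*tf+1) r0 (p0 :: 'a list \<Rightarrow> 'a list)"
    using FCC_exists[OF assms] by blast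
  then have "\<exists>p :: 'a list \<Rightarrow> 'a list. is_FCC f k (2*td+1) (2*tf+1) r0 p" by blast
  then have "\<exists>p :: 'a list \<Rightarrow> 'a list. is_FCC f k (2*td+1) (2*tf+1) r p"
    unfolding r_def r_f_def by (rule LeastI)
  then obtain p :: "'a list \<Rightarrow> 'a list" where P: "is_FCC f k (2*td+1) (2*tf+1) r p" by blast
  have plen: "\<And>u. u \<in> words k \<Longrightarrow> length (p u) = r" using P unfolding is_FCC_def by blast
  have pd: "\<And>u1 u2. u1 \<in> words k \<Longrightarrow> u2 \<in> words k \<Longrightarrow> u1 \<noteq> u2 \<Longrightarrow>
      hamming (u1 @ p u1) (u2 @ p u2) \<ge> 2*td+1" using P unfolding is_FCC_def by blast
  have pf: "\<And>u1 u2. u1 \<in> words k \<Longrightarrow> u2 \<in> words k \<Longrightarrow> f u1 \<noteq> f u2 \<Longrightarrow>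
      hamming (u1 @ p u1) (u2 @ p u2) \<ge> 2*tf+1" using P unfolding is_FCC_def by blast
  have split: "\<And>u1 u2. u1 \<in> words k \<Longrightarrow> u2 \<in> words k \<Longrightarrow>
      hamming (u1 @ p u1) (u2 @ p u2) = hamming u1 u2 + hamming (p u1) (p u2)"
    by (rule hamming_append) (simp add: words_def)
  have part1: "\<forall>us :: 'a list list. distinct us \<and> set us \<subseteq> words k \<longrightarrow>
            r \<ge> N_mat TYPE('a) (length us) (Dmat f td tf us)"
  proof (intro allI impI)
    fix us :: "'a list list" assume us: "distinct us \<and> set us \<subseteq> words k"
    define ps where "ps = (\<lambda>i. p (us ! i))"
    have "(\<forall>i<length us. length (ps i) = r) \<and>
          (\<forall>i<length us. \<forall>j<length us. hamming (ps i) (ps j) \<ge> Dmat f td tf us i j)"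
    proof (intro conjI allI impI)
      fix i assume "i < length us"
      then have "us ! i \<in> words k" using us nth_mem by blast
      then show "length (ps i) = r" using plen ps_def by auto
    next
      fix i j assume ij: "i < length us" "j < length us"
      then have w: "us ! i \<in> words k" "us ! j \<in> words k" using us by auto
      show "hamming (ps i) (ps j) \<ge> Dmat f td tf us i j"
        unfolding Dmat_def ps_def
        using pd[OF w] pf[OF w] split[OF w] by auto
    qed
    then show "r \<ge> N_mat TYPE('a) (length us) (Dmat f td tf us)"
      unfolding N_mat_def by (intro Least_le) blast
  qed
  have part2: "card (f ` words k) \<ge> 2 \<longrightarrow> r \<ge> 2 * tf"
  proof
    assume "card (f ` words k) \<ge> 2"
    then obtain a b where "a \<in> f ` words k" "b \<in> f ` words k" "a \<noteq> b"
      by (metis One_nat_def card_le_Suc0_iff_eq not_less_eq_eq numeral_2_eq_2 card.infinite zero_le_numeral le_zero_eq zero_neq_numeral)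
    then obtain u1 u2 where u: "u1 \<in> words k" "u2 \<in> words k" "f u1 \<noteq> f u2" by auto
    then obtain v w where vw: "length v = length u1" "length w = length u1" "hamming v w \<le> 1" "f v \<noteq> f w"
      using path_lemma[of u1 u2 f] by (auto simp: words_def)
    have vw': "v \<in> words k" "w \<in> words k" using vw u by (auto simp: words_def)
    have "hamming (p v) (p w) \<ge> 2*tf" using pf[OF vw' vw(4)] split[OF vw'] vw(3) by linarith
    moreover have "hamming (p v) (p w) \<le> r" using hamming_le[of "p v" "p w"] plen[OF vw'(1)] by simp
    ultimately show "r \<ge> 2*tf" by linarith
  qed
  have part3: "N_code TYPE('a) (card (UNIV :: 'a set) ^ k) (2*td+1) \<le> k + r"
  proof -
    define C where "C = (\<lambda>u. u @ p u) ` words k"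
    have inj: "inj_on (\<lambda>u. u @ p u) (words k)"
      by (rule inj_onI) (auto simp: words_def dest: append_eq_append_conv[THEN iffD1])
    have cw: "card (words k :: 'a list set) = card (UNIV :: 'a set) ^ k"
      using card_lists_length_eq[of "UNIV :: 'a set" k] by (simp add: words_def)
    have "C \<subseteq> words (k + r) \<and> card C = card (UNIV :: 'a set) ^ k \<and>
      (\<forall>c1\<in>C. \<forall>c2\<in>C. c1 \<noteq> c2 \<longrightarrow> hamming c1 c2 \<ge> 2*td+1)"
      using inj cw pd plen unfolding C_def by (auto simp: words_def card_image)
    then show ?thesis unfolding N_code_def by (intro Least_le) blast
  qed
  show ?thesis using part1 part2 part3 unfolding r_def by auto
qed

end
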